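(* Let $\mathcal{D}$ be a document collection, fix a query $q$ with a unique relevant document $d_q$, and let $f\in[0,1]$. Consider a Repartition system: $r\ge1$ partitions $\{D^{(i)}_1,\dots,D^{(i)}_n\}$, $i=1,\dots,r$, of $\mathcal{D}$, each into $n$ pairwise disjoint shards, constructed independently at random, so that the indices of the shards containing $d_q$ in the different partitions are mutually independent; assume all partitions have the same probability distribution for $q$, i.e., there is $p:\{1,\dots,n\}\to[0,1]$ with $\sum_j p(j)=1$ and $\Pr[d_q\in D^{(i)}_j]=p(j)$ for all $i,j$. Consider also a Replication system consisting of $r$ identical replicas of one of these partitions. In both systems each of the $nr$ shards (replicas) resides on its own node, and each node independently fails to respond with probability $f$, independently of the location of $d_q$; the success probability of a selection of shards is the probability that $d_q$ lies in some selected shard (replica) whose node responds. Then for every shard selection used with the Replication system, there exists a shard selection for the Repartition system selecting the same number of shards whose success probability for $q$ is larger than or equal to that of the Replication selection.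
   Context: Distributed search model: each node searches only its own shard; the query is sent to the selected shards, and results of nodes that fail to respond are dropped. In Replication, all $r$ partitions are exact copies; in Repartition, the $r$ partitions are produced by independent applications of a randomized partitioning scheme. *)

theory Defs
  imports "HOL-Probability.Probability"
begin

text \<open>Nodes are indexed by pairs (j, i): shard j (1..n) of partition / replica i (1..r).
  A node failure vector assigns True to a node that fails to respond; each node fails
  independently with probability f.\<close>

definition fail_pmf :: "nat \<Rightarrow> nat \<Rightarrow> real \<Rightarrow> (nat \<times> nat \<Rightarrow> bool) pmf" where
  "fail_pmf n r f = Pi_pmf ({1..n} \<times> {1..r}) False (\<lambda>_. bernoulli_pmf f)"

text \<open>Replication: one partition, d_q lies in shard k (distributed by p) in every replica.\<close>

definition replication_success ::
  "nat \<Rightarrow> nat \<Rightarrow> nat pmf \<Rightarrow> real \<Rightarrow> (nat \<times> nat) set \<Rightarrow> real" where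
  "replication_success n r p f S =
     measure_pmf.prob (pair_pmf p (fail_pmf n r f))
       {(k, fl). \<exists>(j, i) \<in> S. k = j \<and> \<not> fl (j, i)}"

text \<open>Repartition: in partition i, d_q lies in shard loc i; the loc i are independent,
  each distributed by p.\<close>

definition repartition_success ::
  "nat \<Rightarrow> nat \<Rightarrow> nat pmf \<Rightarrow> real \<Rightarrow> (nat \<times> nat) set \<Rightarrow> real" where
  "repartition_success n r p f S =
     measure_pmf.prob (pair_pmf (Pi_pmf {1..r} 0 (\<lambda>_. p)) (fail_pmf n r f))
       {(loc, fl). \<exists>(j, i) \<in> S. loc i = j \<and> \<not> fl (j, i)}"

end

theory Submission
  imports Defs
begin
lemma prob_pair_pmf:
  "measure_pmf.prob (pair_pmf M N) E =
   measure_pmf.expectation M (\<lambda>a. measure_pmf.prob N {b. (a,b)\<in>E})"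
proof -
  have "ennreal (measure_pmf.prob (pair_pmf M N) E) = emeasure (pair_pmf M N) E"
    by (simp add: measure_pmf.emeasure_eq_measure)
  also have "\<dots> = (\<integral>\<^sup>+a. emeasure (bind_pmf N (\<lambda>y. return_pmf (a, y))) E \<partial>M)"
    by (simp add: pair_pmf_def)
  also have "\<dots> = (\<integral>\<^sup>+a. ennreal (measure_pmf.prob N {b. (a,b)\<in>E}) \<partial>M)"
    apply (intro nn_integral_cong)
    apply (simp add: measure_pmf.emeasure_eq_measure[symmetric])
    subgoal for x
      using nn_integral_indicator[of "{b. (x,b)\<in>E}" "measure_pmf N"]
      by (simp add: indicator_def)
    done
  also have "\<dots> = ennreal (measure_pmf.expectation M (\<lambda>a. measure_pmf.prob N {b. (a,b)\<in>E}))"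
    by (intro nn_integral_eq_integral measure_pmf.integrable_const_bound[where B=1]) auto
  finally show ?thesis by (simp add: ennreal_inj)
qed
lemma cheb:
  fixes w A B :: "'a \<Rightarrow> real"
  assumes fin: "finite K" and w: "\<And>k. k \<in> K \<Longrightarrow> w k \<ge> 0" and s: "(\<Sum>k\<in>K. w k) = 1"
    and ord: "\<And>x y. x \<in> K \<Longrightarrow> y \<in> K \<Longrightarrow> (A x - A y) * (B x - B y) \<ge> 0"
  shows "(\<Sum>k\<in>K. A k * w k) * (\<Sum>k\<in>K. B k * w k) \<le> (\<Sum>k\<in>K. A k * B k * w k)"
proof -
  have "0 \<le> (\<Sum>x\<in>K. \<Sum>y\<in>K. w x * w y * ((A x - A y) * (B x - B y)))"
    by (intro sum_nonneg mult_nonneg_nonneg w ord) auto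
  also have "\<dots> = (\<Sum>x\<in>K. \<Sum>y\<in>K. (A x * B x * w x) * w y + (A y * B y * w y) * w x
         - (A x * w x) * (B y * w y) - (A y * w y) * (B x * w x))"
    by (intro sum.cong refl) (simp add: algebra_simps)
  also have "\<dots> = (\<Sum>x\<in>K. \<Sum>y\<in>K. (A x * B x * w x) * w y) + (\<Sum>x\<in>K. \<Sum>y\<in>K. (A y * B y * w y) * w x)
       - (\<Sum>x\<in>K. \<Sum>y\<in>K. (A x * w x) * (B y * w y)) - (\<Sum>x\<in>K. \<Sum>y\<in>K. (A y * w y) * (B x * w x))"
    by (simp add: sum.distrib sum_subtractf)
  also have "(\<Sum>x\<in>K. \<Sum>y\<in>K. (A x * B x * w x) * w y) = (\<Sum>k\<in>K. A k * B k * w k)"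
    by (simp add: sum_distrib_left[symmetric] s)
  also have "(\<Sum>x\<in>K. \<Sum>y\<in>K. (A y * B y * w y) * w x) = (\<Sum>k\<in>K. A k * B k * w k)"
    by (simp add: sum_distrib_right[symmetric] sum_distrib_left[symmetric] s)
  also have "(\<Sum>x\<in>K. \<Sum>y\<in>K. (A x * w x) * (B y * w y)) = (\<Sum>k\<in>K. A k * w k) * (\<Sum>k\<in>K. B k * w k)"
    by (simp add: sum_product)
  also have "(\<Sum>x\<in>K. \<Sum>y\<in>K. (A y * w y) * (B x * w x)) = (\<Sum>k\<in>K. A k * w k) * (\<Sum>k\<in>K. B k * w k)"
    by (subst sum.swap) (simp add: sum_product)
  finally show ?thesis by simp
qed

lemma prod_ineq:
  fixes w :: "'a \<Rightarrow> real" and phi :: "'b \<Rightarrow> nat \<Rightarrow> real"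
  assumes fin: "finite K" and w: "\<And>k. k \<in> K \<Longrightarrow> w k \<ge> 0" and s: "(\<Sum>k\<in>K. w k) = 1"
    and anti: "\<And>i s t. s \<le> t \<Longrightarrow> phi i t \<le> phi i s"
    and nn: "\<And>i t. phi i t \<ge> 0"
    and I: "finite I"
  shows "(\<Prod>i\<in>I. \<Sum>k\<in>K. phi i (m k) * w k) \<le> (\<Sum>k\<in>K. (\<Prod>i\<in>I. phi i (m k)) * w k)"
  using I
proof (induction I rule: finite_induct)
  case empty
  then show ?case using s by simp
next
  case (insert j I)
  have e0: "(\<Sum>k\<in>K. phi j (m k) * w k) \<ge> 0"
    by (intro sum_nonneg mult_nonneg_nonneg nn w)
  have "(\<Prod>i\<in>insert j I. \<Sum>k\<in>K. phi i (m k) * w k)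
      = (\<Sum>k\<in>K. phi j (m k) * w k) * (\<Prod>i\<in>I. \<Sum>k\<in>K. phi i (m k) * w k)"
    using insert by simp
  also have "\<dots> \<le> (\<Sum>k\<in>K. phi j (m k) * w k) * (\<Sum>k\<in>K. (\<Prod>i\<in>I. phi i (m k)) * w k)"
    by (intro mult_left_mono insert.IH e0)
  also have "\<dots> \<le> (\<Sum>k\<in>K. phi j (m k) * (\<Prod>i\<in>I. phi i (m k)) * w k)"
  proof (rule cheb[OF fin w s])
    fix x y assume "x \<in> K" "y \<in> K"
    have pm: "(\<Prod>i\<in>I. phi i t) \<le> (\<Prod>i\<in>I. phi i s)" if "s \<le> t" for s t
      by (intro prod_mono conjI nn anti that)
    show "(phi j (m x) - phi j (m y)) * ((\<Prod>i\<in>I. phi i (m x)) - (\<Prod>i\<in>I. phi i (m y))) \<ge> 0"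
    proof (cases "m x \<le> m y")
      case True
      then show ?thesis using anti[OF True, of j] pm[OF True] by (intro mult_nonneg_nonneg) auto
    next
      case False
      then have F: "m y \<le> m x" by simp
      show ?thesis using anti[OF F, of j] pm[OF F] by (intro mult_nonpos_nonpos) auto
    qed
  qed
  also have "\<dots> = (\<Sum>k\<in>K. (\<Prod>i\<in>insert j I. phi i (m k)) * w k)"
    using insert by simp
  finally show ?case .
qed

lemma fail_prob:
  assumes "finite A" "B \<subseteq> A" "0 \<le> f" "f \<le> 1"
  shows "measure_pmf.prob (Pi_pmf A False (\<lambda>_. bernoulli_pmf f)) {fl. \<forall>x\<in>B. fl x}
         = (\<Prod>x\<in>A. if x \<in> B then f else 1)"
proof -
  have "measure_pmf.prob (Pi_pmf A False (\<lambda>_. bernoulli_pmf f)) {fl. \<forall>x\<in>B. fl x}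
      = measure_pmf.prob (Pi_pmf A False (\<lambda>_. bernoulli_pmf f))
          (PiE_dflt A False (\<lambda>x. if x \<in> B then {True} else UNIV))"
    using assms by (intro measure_prob_cong_0)
       (auto simp: PiE_dflt_def intro!: pmf_Pi_outside split: if_splits)
  also have "\<dots> = (\<Prod>x\<in>A. measure_pmf.prob (bernoulli_pmf f) (if x \<in> B then {True} else UNIV))"
    using assms by (simp add: measure_Pi_pmf_PiE_dflt)
  also have "\<dots> = (\<Prod>x\<in>A. if x \<in> B then f else 1)"
    using assms by (intro prod.cong refl) (simp add: measure_pmf_single)
  finally show ?thesis .
qed

lemma pif:
  assumes "finite I"
  shows "(\<Prod>i\<in>I. if P i then (c::real) else 1) = c ^ card {i\<in>I. P i}"
proof -
  have "(\<Prod>i\<in>I. if P i then c else 1) = (\<Prod>i\<in>{i\<in>I. P i}. c)"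
    using assms by (intro prod.mono_neutral_cong_right) auto
  then show ?thesis by simp
qed

theorem theorem2:
  fixes n r :: nat and p :: "nat pmf" and f :: real
  assumes "r \<ge> 1"
    and "set_pmf p \<subseteq> {1..n}"
    and "0 \<le> f" and "f \<le> 1"
  shows "\<forall>S \<subseteq> {1..n} \<times> {1..r}. \<exists>T \<subseteq> {1..n} \<times> {1..r}.
           card T = card S \<and>
           repartition_success n r p f T \<ge> replication_success n r p f S"
proof (intro allI impI)
  fix S assume S: "S \<subseteq> {1..n} \<times> {1..r}"
  define G where "G = {1..n} \<times> {1..r}"
  have finG: "finite G" by (simp add: G_def)
  define m where "m k = card {i\<in>{1..r}. (k,i)\<in>S}" for k
  define T where "T = Sigma {1..n} (\<lambda>k. {1..m k})"
  define phi where "phi i t = (if i \<le> t then f else 1)" for i t :: nat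
  define w where "w = pmf p"
  have mr: "m k \<le> r" for k
  proof -
    have "m k \<le> card {1..r}" unfolding m_def by (intro card_mono) auto
    then show ?thesis by simp
  qed
  have TG: "T \<subseteq> G" using mr by (fastforce simp: T_def G_def intro: le_trans)
  have SS: "S = Sigma {1..n} (\<lambda>k. {i\<in>{1..r}. (k,i)\<in>S})" using S by auto
  have cardT: "card T = card S"
    apply (subst SS)
    apply (simp add: T_def m_def)
    done
  have w1: "(\<Sum>k\<in>{1..n}. w k) = 1" unfolding w_def by (rule sum_pmf_eq_1) (use assms in auto)
  have fin_p: "finite (set_pmf p)" using assms(2) finite_subset by blast
  define E where "E = {(k, fl). \<exists>(j, i) \<in> S. k = j \<and> \<not> fl (j, i)}"
  have repl: "replication_success n r p f S = 1 - (\<Sum>k\<in>{1..n}. (\<Prod>i\<in>{1..r}. phi i (m k)) * w k)"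
  proof -
    have c: "measure_pmf.prob (pair_pmf p (fail_pmf n r f)) E
        = 1 - measure_pmf.prob (pair_pmf p (fail_pmf n r f)) (- E)"
      using measure_pmf.prob_compl[of "- E" "pair_pmf p (fail_pmf n r f)"] by simp
    have inner: "measure_pmf.prob (fail_pmf n r f) {fl. (k, fl) \<in> - E} = (\<Prod>i\<in>{1..r}. phi i (m k))"
      for k
    proof -
      have "{fl. (k, fl) \<in> - E} = {fl. \<forall>x\<in>{x\<in>S. fst x = k}. fl x}"
        by (auto simp: E_def)
      then have "measure_pmf.prob (fail_pmf n r f) {fl. (k, fl) \<in> - E}
          = (\<Prod>x\<in>G. if x \<in> {x\<in>S. fst x = k} then f else 1)"
        unfolding fail_pmf_def using fail_prob[of G "{x\<in>S. fst x = k}" f] assms S finG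
        by (auto simp: G_def)
      also have "\<dots> = f ^ card {x\<in>G. x \<in> {x\<in>S. fst x = k}}" by (rule pif[OF finG])
      also have "{x\<in>G. x \<in> {x\<in>S. fst x = k}} = Pair k ` {i\<in>{1..r}. (k,i)\<in>S}"
        using S by (auto simp: G_def)
      also have "card \<dots> = m k" unfolding m_def by (intro card_image) (auto simp: inj_on_def)
      also have "f ^ m k = (\<Prod>i\<in>{1..r}. phi i (m k))"
      proof -
        have "{i\<in>{1..r}. i \<le> m k} = {1..m k}" using mr[of k] by auto
        then show ?thesis unfolding phi_def by (simp add: pif)
      qed
      finally show ?thesis .
    qed
    have "measure_pmf.prob (pair_pmf p (fail_pmf n r f)) (- E)
        = measure_pmf.expectation p (\<lambda>k. \<Prod>i\<in>{1..r}. phi i (m k))"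
      by (subst prob_pair_pmf) (simp only: inner)
    also have "\<dots> = (\<Sum>k\<in>{1..n}. (\<Prod>i\<in>{1..r}. phi i (m k)) * w k)"
      unfolding w_def by (rule integral_measure_pmf_real) (use assms in auto)
    finally show ?thesis unfolding replication_success_def E_def[symmetric] c by simp
  qed
  define E' where "E' = {(loc, fl). \<exists>(j, i) \<in> T. loc i = j \<and> \<not> fl (j, i)}"
  define g where "g i v = (if (v, i) \<in> T then f else 1)" for i v
  have rep: "repartition_success n r p f T = 1 - (\<Prod>i\<in>{1..r}. \<Sum>k\<in>{1..n}. phi i (m k) * w k)"
  proof -
    let ?L = "Pi_pmf {1..r} 0 (\<lambda>_. p)"
    have c: "measure_pmf.prob (pair_pmf ?L (fail_pmf n r f)) E'
        = 1 - measure_pmf.prob (pair_pmf ?L (fail_pmf n r f)) (- E')"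
      using measure_pmf.prob_compl[of "- E'" "pair_pmf ?L (fail_pmf n r f)"] by simp
    have inner: "measure_pmf.prob (fail_pmf n r f) {fl. (loc, fl) \<in> - E'} = (\<Prod>i\<in>{1..r}. g i (loc i))"
      for loc :: "nat \<Rightarrow> nat"
    proof -
      define B where "B = {x\<in>T. loc (snd x) = fst x}"
      have BG: "B \<subseteq> G" using TG by (auto simp: B_def)
      have "{fl. (loc, fl) \<in> - E'} = {fl. \<forall>x\<in>B. fl x}"
        by (auto simp: E'_def B_def)
      then have "measure_pmf.prob (fail_pmf n r f) {fl. (loc, fl) \<in> - E'}
          = (\<Prod>x\<in>G. if x \<in> B then f else 1)"
        unfolding fail_pmf_def using fail_prob[of G B f] assms BG finG
        by (auto simp: G_def)
      also have "\<dots> = f ^ card {x\<in>G. x \<in> B}" by (rule pif[OF finG])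
      also have "{x\<in>G. x \<in> B} = (\<lambda>i. (loc i, i)) ` {i\<in>{1..r}. (loc i, i) \<in> T}"
        using BG TG by (auto simp: B_def G_def image_iff)
      also have "card \<dots> = card {i\<in>{1..r}. (loc i, i) \<in> T}"
        by (intro card_image) (auto simp: inj_on_def)
      also have "f ^ \<dots> = (\<Prod>i\<in>{1..r}. g i (loc i))"
        unfolding g_def by (simp add: pif)
      finally show ?thesis .
    qed
    have "measure_pmf.prob (pair_pmf ?L (fail_pmf n r f)) (- E')
        = measure_pmf.expectation ?L (\<lambda>loc. \<Prod>i\<in>{1..r}. g i (loc i))"
      by (subst prob_pair_pmf) (simp only: inner)
    also have "\<dots> = (\<Prod>i\<in>{1..r}. measure_pmf.expectation p (g i))"
      by (rule expectation_prod_Pi_pmf)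
         (simp_all add: g_def assms(3) integrable_measure_pmf_finite[OF fin_p])
    also have "\<dots> = (\<Prod>i\<in>{1..r}. \<Sum>k\<in>{1..n}. phi i (m k) * w k)"
    proof (intro prod.cong refl)
      fix i assume i: "i \<in> {1..r}"
      have "measure_pmf.expectation p (g i) = (\<Sum>k\<in>{1..n}. g i k * w k)"
        unfolding w_def by (rule integral_measure_pmf_real) (use assms in auto)
      also have "\<dots> = (\<Sum>k\<in>{1..n}. phi i (m k) * w k)"
        using i by (intro sum.cong refl) (auto simp: g_def phi_def T_def)
      finally show "measure_pmf.expectation p (g i) = (\<Sum>k\<in>{1..n}. phi i (m k) * w k)" .
    qed
    finally show ?thesis unfolding repartition_success_def E'_def[symmetric] c by simp
  qed
  have ineq: "(\<Prod>i\<in>{1..r}. \<Sum>k\<in>{1..n}. phi i (m k) * w k)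
      \<le> (\<Sum>k\<in>{1..n}. (\<Prod>i\<in>{1..r}. phi i (m k)) * w k)"
    by (rule prod_ineq) (use w1 assms in \<open>auto simp: w_def phi_def\<close>)
  show "\<exists>T \<subseteq> {1..n} \<times> {1..r}. card T = card S \<and>
           repartition_success n r p f T \<ge> replication_success n r p f S"
  proof (intro exI conjI)
    show "T \<subseteq> {1..n} \<times> {1..r}" using TG by (simp add: G_def)
    show "card T = card S" by (rule cardT)
    show "repartition_success n r p f T \<ge> replication_success n r p f S"
      unfolding rep repl using ineq by linarith
  qed
qed

end
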